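(* Let $G=K_S(r,s)$ be a complete split graph. Then the sparing number of $G$ equals the sparing number of a maximal clique in $G$.
   Context: A split graph is a graph whose vertex set can be partitioned into a clique $K_r$ and an independent set $S$. It is a complete split graph, denoted $K_S(r,s)$ with $r=|V(K_r)|$ and $s=|S|$, if every vertex of $S$ is adjacent to every vertex of $K_r$. Let $\mathbb{N}_0$ be the set of non-negative integers; for $A,B\subseteq\mathbb{N}_0$, $A+B=\{a+b:a\in A,b\in B\}$. An integer additive set-indexer (IASI) of a graph $G$ is an injective map $f:V(G)\to\mathcal{P}(\mathbb{N}_0)$ such that $f^+:E(G)\to\mathcal{P}(\mathbb{N}_0)$, $f^+(uv)=f(u)+f(v)$, is injective. A weak IASI is an IASI with $|f^+(uv)|=\max(|f(u)|,|f(v)|)$ for every edge $uv$. An edge $e$ is mono-indexed if $|f^+(e)|=1$. The sparing number $\varphi(G)$ is the minimum number of mono-indexed edges over all weak IASIs of $G$. *)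

theory Defs
  imports Main "HOL-Library.Set_Algebras"
begin

definition simple_graph :: "'a set \<Rightarrow> 'a set set \<Rightarrow> bool" where
  "simple_graph V E \<longleftrightarrow> finite V \<and>
     (\<forall>e\<in>E. \<exists>u v. e = {u, v} \<and> u \<noteq> v \<and> u \<in> V \<and> v \<in> V)"

definition complete_split_graph ::
  "'a set \<Rightarrow> 'a set set \<Rightarrow> 'a set \<Rightarrow> 'a set \<Rightarrow> nat \<Rightarrow> nat \<Rightarrow> bool" where
  "complete_split_graph V E K S r s \<longleftrightarrow> finite V \<and>
     V = K \<union> S \<and> K \<inter> S = {} \<and> card K = r \<and> card S = s \<and>
     E = {{u, v} | u v. u \<in> K \<and> v \<in> K \<and> u \<noteq> v} \<union> {{u, v} | u v. u \<in> K \<and> v \<in> S}"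

definition is_clique :: "'a set \<Rightarrow> 'a set set \<Rightarrow> 'a set \<Rightarrow> bool" where
  "is_clique V E C \<longleftrightarrow> C \<subseteq> V \<and> (\<forall>u\<in>C. \<forall>v\<in>C. u \<noteq> v \<longrightarrow> {u, v} \<in> E)"

definition maximal_clique :: "'a set \<Rightarrow> 'a set set \<Rightarrow> 'a set \<Rightarrow> bool" where
  "maximal_clique V E C \<longleftrightarrow> is_clique V E C \<and> (\<forall>D. is_clique V E D \<and> C \<subseteq> D \<longrightarrow> D = C)"

definition induced_edges :: "'a set set \<Rightarrow> 'a set \<Rightarrow> 'a set set" where
  "induced_edges E C = {e \<in> E. e \<subseteq> C}"

definition iasi :: "'a set \<Rightarrow> 'a set set \<Rightarrow> ('a \<Rightarrow> nat set) \<Rightarrow> bool" where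
  "iasi V E f \<longleftrightarrow> inj_on f V \<and> (\<forall>v\<in>V. finite (f v) \<and> f v \<noteq> {}) \<and>
     (\<forall>u v u' v'. {u, v} \<in> E \<longrightarrow> {u', v'} \<in> E \<longrightarrow> f u + f v = f u' + f v' \<longrightarrow> {u, v} = {u', v'})"

definition weak_iasi :: "'a set \<Rightarrow> 'a set set \<Rightarrow> ('a \<Rightarrow> nat set) \<Rightarrow> bool" where
  "weak_iasi V E f \<longleftrightarrow> iasi V E f \<and>
     (\<forall>u v. {u, v} \<in> E \<longrightarrow> card (f u + f v) = max (card (f u)) (card (f v)))"

definition mono_indexed_edges :: "'a set set \<Rightarrow> ('a \<Rightarrow> nat set) \<Rightarrow> 'a set set" where
  "mono_indexed_edges E f = {e \<in> E. \<exists>u v. e = {u, v} \<and> card (f u + f v) = 1}"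

definition sparing_number :: "'a set \<Rightarrow> 'a set set \<Rightarrow> nat" where
  "sparing_number V E = Min {card (mono_indexed_edges E f) | f. weak_iasi V E f}"

end

theory Submission
  imports Defs
begin

lemma sp_ge:
  fixes A B :: "nat set"
  assumes "finite A" "finite B" "A \<noteq> {}"
  shows "card B \<le> card (A + B)"
proof -
  have m: "Min A \<in> A" using assms by simp
  have "(\<lambda>b. Min A + b) ` B \<subseteq> A + B"
    using m by (auto simp: set_plus_def)
  moreover have "card ((\<lambda>b. Min A + b) ` B) = card B"
    by (rule card_image) (auto simp: inj_on_def)
  ultimately show ?thesis
    by (metis assms(1,2) card_mono finite_set_plus)
qed

lemma sp_gt:
  fixes A B :: "nat set"
  assumes "finite A" "finite B" "B \<noteq> {}" "card A \<ge> 2"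
  shows "card B < card (A + B)"
proof -
  have An: "A \<noteq> {}" using assms by auto
  have m: "Min A \<in> A" "Max A \<in> A" "Max B \<in> B" using assms An by auto
  have "Min A \<noteq> Max A"
  proof
    assume h: "Min A = Max A"
    have "A \<subseteq> {Min A}"
    proof
      fix x assume "x \<in> A"
      then have "Min A \<le> x" "x \<le> Max A" using assms by auto
      then show "x \<in> {Min A}" using h by simp
    qed
    then have "card A \<le> card {Min A}" by (intro card_mono) auto
    then have "card A \<le> 1" by simp
    then show False using assms by simp
  qed
  moreover have "Min A \<le> Max A" using assms An by simp
  ultimately have lt: "Min A < Max A" by simp
  let ?T = "insert (Max A + Max B) ((\<lambda>b. Min A + b) ` B)"
  have sub: "?T \<subseteq> A + B"
    using m unfolding set_plus_def by blast
  moreover have "Max A + Max B \<notin> (\<lambda>b. Min A + b) ` B"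
  proof
    assume "Max A + Max B \<in> (\<lambda>b. Min A + b) ` B"
    then obtain b where "b \<in> B" "Max A + Max B = Min A + b" by auto
    moreover have "b \<le> Max B" using \<open>b \<in> B\<close> assms by simp
    ultimately show False using lt by simp
  qed
  moreover have "card ((\<lambda>b. Min A + b) ` B) = card B"
    by (rule card_image) (auto simp: inj_on_def)
  ultimately have "card ?T = card B + 1" using assms by (simp add: card_insert_if)
  moreover have "card ?T \<le> card (A + B)"
    using sub assms by (intro card_mono) (auto simp: finite_set_plus)
  ultimately show ?thesis by simp
qed

lemma sp_weak:
  fixes A B :: "nat set"
  assumes "finite A" "finite B" "A \<noteq> {}" "B \<noteq> {}"
    "card (A + B) = max (card A) (card B)"
  shows "card A = 1 \<or> card B = 1"
proof (rule ccontr)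
  assume "\<not> ?thesis"
  moreover have "card A \<ge> 1" "card B \<ge> 1" using assms by (auto simp: Suc_le_eq card_gt_0_iff)
  ultimately have "card A \<ge> 2" "card B \<ge> 2" by auto
  then have "card B < card (A + B)" "card A < card (B + A)"
    using sp_gt[OF assms(1,2,4)] sp_gt[OF assms(2,1,3)] by auto
  then show False using assms(5) by (simp add: add.commute)
qed

lemma sp_one:
  fixes A B :: "nat set"
  assumes "finite A" "finite B" "A \<noteq> {}" "B \<noteq> {}" "card (A + B) = 1"
  shows "card A = 1 \<and> card B = 1"
proof -
  have "card B \<le> 1" "card A \<le> 1" using sp_ge[OF assms(1,2,3)] sp_ge[OF assms(2,1,4)] assms(5) by (simp_all add: add.commute)
  moreover have "card A \<ge> 1" "card B \<ge> 1" using assms by (auto simp: Suc_le_eq card_gt_0_iff)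
  ultimately show ?thesis by auto
qed

lemma sp_singl: "{a::nat} + {b} = {a + b}"
  by (auto simp: set_plus_def)

lemma sp_singl2: "{a::nat} + {0, q} = {a, a + q}"
  by (auto simp: set_plus_def)


lemma sp_sing_card: "card ({p::nat} + B) = card B"
proof -
  have "{p} + B = (\<lambda>b. p + b) ` B" by (auto simp: set_plus_def)
  then show ?thesis by (simp add: card_image inj_on_def)
qed

lemma clique_edges_card:
  assumes "finite A"
  shows "card {{u, v} | u v. u \<in> A \<and> v \<in> A \<and> u \<noteq> v} = card A choose 2"
proof -
  have "{{u, v} | u v. u \<in> A \<and> v \<in> A \<and> u \<noteq> v} = {B. B \<subseteq> A \<and> card B = 2}"
    by (auto simp: card_2_iff)
  then show ?thesis using n_subsets[OF assms] by simp
qed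

lemma clique_edges_finite:
  assumes "finite A"
  shows "finite {{u, v} | u v. u \<in> A \<and> v \<in> A \<and> u \<noteq> v}"
proof -
  have "{{u, v} | u v. u \<in> A \<and> v \<in> A \<and> u \<noteq> v} \<subseteq> Pow A" by auto
  then show ?thesis using assms finite_subset by blast
qed

lemma sidon_aux:
  assumes "a < b" "c < d" "(2::nat)^a + 2^b = 2^c + 2^d"
  shows "a = c \<and> b = d"
proof -
  have key: False if "x < y" "y < w" "(2::nat)^x + 2^y = 2^z + 2^w" for x y z w
  proof -
    have "(2::nat)^x < 2^y" using that by simp
    then have "(2::nat)^x + 2^y < 2^(Suc y)" by simp
    also have "\<dots> \<le> 2^w" using that by (intro power_increasing) auto
    also have "\<dots> \<le> 2^z + 2^w" by simp
    finally show False using that by simp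
  qed
  have "b = d"
  proof (rule ccontr)
    assume "b \<noteq> d"
    then have "b < d \<or> d < b" by auto
    then show False
      using key[of a b d c] key[of c d b a] assms by (auto simp: add.commute)
  qed
  then show ?thesis using assms by simp
qed

lemma sidon:
  assumes "a \<noteq> b" "c \<noteq> d" "(2::nat)^a + 2^b = 2^c + 2^d"
  shows "{a, b} = {c, d}"
proof -
  have "a < b \<or> b < a" "c < d \<or> d < c" using assms by auto
  then show ?thesis
    using sidon_aux[of a b c d] sidon_aux[of b a c d] sidon_aux[of a b d c] sidon_aux[of b a d c]
      assms(3) by (auto simp: add.commute)
qed

lemma lower_bound:
  assumes wk: "weak_iasi V E f" and fE: "finite E" and AV: "A \<subseteq> V" and An: "A \<noteq> {}"
    and fA: "finite A" and cl: "\<forall>u\<in>A. \<forall>v\<in>A. u \<noteq> v \<longrightarrow> {u, v} \<in> E"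
  shows "(card A - 1) choose 2 \<le> card (mono_indexed_edges E f)"
proof -
  have lab: "\<forall>v\<in>V. finite (f v) \<and> f v \<noteq> {}" using wk by (simp add: weak_iasi_def iasi_def)
  have wc: "\<forall>u v. {u, v} \<in> E \<longrightarrow> card (f u + f v) = max (card (f u)) (card (f v))"
    using wk by (simp add: weak_iasi_def)
  have ind: "card (f x) = 1 \<or> card (f y) = 1" if "x \<in> A" "y \<in> A" "x \<noteq> y" for x y
  proof -
    have "x \<in> V" "y \<in> V" using that AV by auto
    then show ?thesis using sp_weak[of "f x" "f y"] lab wc cl that by blast
  qed
  obtain x where xA: "x \<in> A" and all: "\<forall>y\<in>A - {x}. card (f y) = 1"
  proof (cases "\<exists>x\<in>A. card (f x) \<noteq> 1")
    case True
    then obtain x where "x \<in> A" "card (f x) \<noteq> 1" by blast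
    then show ?thesis using ind that by blast
  next
    case False
    then show ?thesis using that An by blast
  qed
  have sub: "{{u, v} | u v. u \<in> A - {x} \<and> v \<in> A - {x} \<and> u \<noteq> v} \<subseteq> mono_indexed_edges E f"
  proof
    fix e assume "e \<in> {{u, v} | u v. u \<in> A - {x} \<and> v \<in> A - {x} \<and> u \<noteq> v}"
    then obtain u v where e: "e = {u, v}" "u \<in> A - {x}" "v \<in> A - {x}" "u \<noteq> v" by blast
    then have "card (f u) = 1" "card (f v) = 1" using all by auto
    then obtain a b where "f u = {a}" "f v = {b}" by (meson card_1_singletonE)
    then have "card (f u + f v) = 1" by (simp add: sp_singl)
    moreover have "e \<in> E" using e cl by auto
    ultimately show "e \<in> mono_indexed_edges E f" unfolding mono_indexed_edges_def using e by blast
  qed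
  have "finite (mono_indexed_edges E f)"
    using fE by (rule finite_subset[rotated]) (auto simp: mono_indexed_edges_def)
  then have "card {{u, v} | u v. u \<in> A - {x} \<and> v \<in> A - {x} \<and> u \<noteq> v} \<le> card (mono_indexed_edges E f)"
    using sub card_mono by blast
  moreover have "card (A - {x}) = card A - 1" using xA fA by simp
  ultimately show ?thesis using clique_edges_card[of "A - {x}"] fA by simp
qed


lemma edge_iff:
  assumes "complete_split_graph V E K S r s"
  shows "{u, v} \<in> E \<longleftrightarrow> u \<noteq> v \<and> u \<in> V \<and> v \<in> V \<and> (u \<in> K \<or> v \<in> K)"
proof -
  have V: "V = K \<union> S" "K \<inter> S = {}"
    and E: "E = {{u, v} | u v. u \<in> K \<and> v \<in> K \<and> u \<noteq> v} \<union> {{u, v} | u v. u \<in> K \<and> v \<in> S}"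
    using assms by (auto simp: complete_split_graph_def)
  show ?thesis
  proof
    assume "{u, v} \<in> E"
    then show "u \<noteq> v \<and> u \<in> V \<and> v \<in> V \<and> (u \<in> K \<or> v \<in> K)"
      unfolding E V using V(2) by (auto simp: doubleton_eq_iff)
  next
    assume h: "u \<noteq> v \<and> u \<in> V \<and> v \<in> V \<and> (u \<in> K \<or> v \<in> K)"
    show "{u, v} \<in> E"
    proof (cases "u \<in> K \<and> v \<in> K")
      case True then show ?thesis unfolding E using h by blast
    next
      case False
      then have "(u \<in> K \<and> v \<in> S) \<or> (v \<in> K \<and> u \<in> S)" using h V by auto
      then show ?thesis unfolding E by (auto simp: insert_commute)
    qed
  qed
qed

lemma edges_sub_pow:
  assumes "complete_split_graph V E K S r s"
  shows "E \<subseteq> Pow V" "finite E"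
proof -
  have "e \<subseteq> V" if eE: "e \<in> E" for e
  proof -
    have E: "E = {{u, v} | u v. u \<in> K \<and> v \<in> K \<and> u \<noteq> v} \<union> {{u, v} | u v. u \<in> K \<and> v \<in> S}"
      using assms by (simp add: complete_split_graph_def)
    then obtain u v where "e = {u, v}" using eE by blast
    then show ?thesis using eE edge_iff[OF assms, of u v] by auto
  qed
  then show "E \<subseteq> Pow V" by auto
  moreover have "finite V" using assms unfolding complete_split_graph_def by blast
  ultimately show "finite E" using finite_subset by blast
qed

lemma construction:
  assumes csg: "complete_split_graph V E K S r s"
  shows "\<exists>f. weak_iasi V E f \<and> card (mono_indexed_edges E f) \<le> r choose 2"
proof -
  have fV: "finite V" and V: "V = K \<union> S" "K \<inter> S = {}" and cK: "card K = r"
    using csg unfolding complete_split_graph_def by blast+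
  obtain idx :: "'a \<Rightarrow> nat" where inj: "inj_on idx V"
    using finite_imp_inj_to_nat_seg[OF fV] by blast
  define f where "f x = (if x \<in> K then {(2::nat) ^ idx x} else {0, 2 ^ idx x})" for x
  have cf: "card (f x) = (if x \<in> K then 1 else 2)" for x
    by (simp add: f_def)
  have ff: "finite (f x) \<and> f x \<noteq> {}" for x by (simp add: f_def)
  have EI: "{u, v} \<in> E \<longleftrightarrow> u \<noteq> v \<and> u \<in> V \<and> v \<in> V \<and> (u \<in> K \<or> v \<in> K)" for u v
    using edge_iff[OF csg] .
  have injf: "inj_on f V"
  proof (rule inj_onI)
    fix x y assume xy: "x \<in> V" "y \<in> V" "f x = f y"
    have "idx x = idx y"
    proof (cases "x \<in> K"; cases "y \<in> K")
      assume "x \<in> K" "y \<in> K" then show ?thesis using xy by (simp add: f_def)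
    next
      assume "x \<in> K" "y \<notin> K" then show ?thesis using xy by (simp add: f_def doubleton_eq_iff)
    next
      assume "x \<notin> K" "y \<in> K" then show ?thesis using xy by (simp add: f_def doubleton_eq_iff)
    next
      assume "x \<notin> K" "y \<notin> K" then show ?thesis using xy by (simp add: f_def doubleton_eq_iff)
    qed
    then show "x = y" using inj xy by (simp add: inj_on_def)
  qed
  have norm: "\<exists>a b. {a, b} = {u, v} \<and> a \<in> K \<and> a \<noteq> b \<and> b \<in> V \<and> f u + f v = f a + f b"
    if "{u, v} \<in> E" for u v
  proof (cases "u \<in> K")
    case True
    have "u \<noteq> v" "v \<in> V" using that EI by auto
    then show ?thesis using True by (intro exI[of _ u] exI[of _ v]) simp
  next
    case False
    then have "v \<in> K" "u \<in> V" "u \<noteq> v" using that EI by auto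
    then show ?thesis by (intro exI[of _ v] exI[of _ u]) (auto simp: add.commute insert_commute)
  qed
  have sumK: "f a + f b = {2 ^ idx a + 2 ^ idx b}" if "a \<in> K" "b \<in> K" for a b
    using that by (simp add: f_def sp_singl)
  have sumS: "f a + f b = {2 ^ idx a, 2 ^ idx a + 2 ^ idx b}" if "a \<in> K" "b \<notin> K" for a b
    using that by (simp add: f_def sp_singl2)
  have einj: "{a, b} = {a', b'}"
    if "a \<in> K" "a \<noteq> b" "b \<in> V" "a' \<in> K" "a' \<noteq> b'" "b' \<in> V" "f a + f b = f a' + f b'"
    for a b a' b'
  proof -
    have aV: "a \<in> V" "a' \<in> V" using that V by auto
    have ia: "idx a \<noteq> idx b" "idx a' \<noteq> idx b'" using that aV inj by (auto simp: inj_on_def)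
    have "{idx a, idx b} = {idx a', idx b'}"
    proof (cases "b \<in> K"; cases "b' \<in> K")
      assume "b \<in> K" "b' \<in> K"
      then have "(2::nat)^idx a + 2^idx b = 2^idx a' + 2^idx b'"
        using that(7) sumK[of a b] sumK[of a' b'] that(1,4) by simp
      then show ?thesis using sidon ia by blast
    next
      assume "b \<in> K" "b' \<notin> K"
      then have "{2 ^ idx a + 2 ^ idx b} = {(2::nat) ^ idx a', 2 ^ idx a' + 2 ^ idx b'}"
        using that sumK sumS by auto
      then have "(2::nat) ^ idx a' = 2 ^ idx a' + 2 ^ idx b'" by (metis insertCI singletonD)
      then show ?thesis by simp
    next
      assume "b \<notin> K" "b' \<in> K"
      then have "{2 ^ idx a' + 2 ^ idx b'} = {(2::nat) ^ idx a, 2 ^ idx a + 2 ^ idx b}"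
        using that sumK sumS by auto
      then have "(2::nat) ^ idx a = 2 ^ idx a + 2 ^ idx b" by (metis insertCI singletonD)
      then show ?thesis by simp
    next
      assume "b \<notin> K" "b' \<notin> K"
      then have h: "{(2::nat) ^ idx a, 2 ^ idx a + 2 ^ idx b} = {(2::nat) ^ idx a', 2 ^ idx a' + 2 ^ idx b'}"
        using that sumS by auto
      have "Min {(2::nat) ^ idx a, 2 ^ idx a + 2 ^ idx b} = 2 ^ idx a" by simp
      moreover have "Min {(2::nat) ^ idx a', 2 ^ idx a' + 2 ^ idx b'} = 2 ^ idx a'" by simp
      ultimately have e1: "(2::nat) ^ idx a = 2 ^ idx a'" using h by metis
      have "Max {(2::nat) ^ idx a, 2 ^ idx a + 2 ^ idx b} = 2 ^ idx a + 2 ^ idx b" by simp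
      moreover have "Max {(2::nat) ^ idx a', 2 ^ idx a' + 2 ^ idx b'} = 2 ^ idx a' + 2 ^ idx b'" by simp
      ultimately have "(2::nat) ^ idx a + 2 ^ idx b = 2 ^ idx a' + 2 ^ idx b'" using h by metis
      then have "(2::nat) ^ idx b = 2 ^ idx b'" using e1 by simp
      then show ?thesis using e1 by simp
    qed
    then have img: "idx ` {a, b} = idx ` {a', b'}" by simp
    have s1: "{a, b} \<subseteq> V" and s2: "{a', b'} \<subseteq> V" using that aV by auto
    show ?thesis using iffD1[OF inj_on_image_eq_iff[OF inj s1 s2] img] .
  qed
  have "iasi V E f"
    unfolding iasi_def
  proof (intro conjI allI impI ballI injf)
    fix v show "finite (f v)" "f v \<noteq> {}" using ff by auto
  next
    fix u v u' v'
    assume h: "{u, v} \<in> E" "{u', v'} \<in> E" "f u + f v = f u' + f v'"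
    obtain a b where ab: "{a, b} = {u, v}" "a \<in> K" "a \<noteq> b" "b \<in> V" "f u + f v = f a + f b"
      using norm[OF h(1)] by blast
    obtain a' b' where ab': "{a', b'} = {u', v'}" "a' \<in> K" "a' \<noteq> b'" "b' \<in> V" "f u' + f v' = f a' + f b'"
      using norm[OF h(2)] by blast
    have "f a + f b = f a' + f b'" using ab(5) ab'(5) h(3) by metis
    then have "{a, b} = {a', b'}" using einj[OF ab(2,3,4) ab'(2,3,4)] by blast
    then show "{u, v} = {u', v'}" using ab(1) ab'(1) by metis
  qed
  moreover have "\<forall>u v. {u, v} \<in> E \<longrightarrow> card (f u + f v) = max (card (f u)) (card (f v))"
  proof (intro allI impI)
    fix u v assume uvE: "{u, v} \<in> E"
    obtain a b where ab: "{a, b} = {u, v}" "a \<in> K" "a \<noteq> b" "b \<in> V" "f u + f v = f a + f b"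
      using norm[OF uvE] by blast
    have fa: "f a = {2 ^ idx a}" using ab(2) by (simp add: f_def)
    have "card (f a + f b) = card (f b)" unfolding fa by (rule sp_sing_card)
    also have "\<dots> = max (card (f a)) (card (f b))"
      using cf[of a] cf[of b] ab(2) by simp
    finally have c1: "card (f u + f v) = max (card (f a)) (card (f b))" using ab(5) by simp
    have "(u = a \<and> v = b) \<or> (u = b \<and> v = a)" using ab(1) by (simp add: doubleton_eq_iff) blast
    then show "card (f u + f v) = max (card (f u)) (card (f v))"
      using c1 by (metis max.commute)
  qed
  ultimately have wk: "weak_iasi V E f" by (simp add: weak_iasi_def)
  have sub: "mono_indexed_edges E f \<subseteq> {{u, v} | u v. u \<in> K \<and> v \<in> K \<and> u \<noteq> v}"
  proof
    fix e assume "e \<in> mono_indexed_edges E f"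
    then obtain u v where e: "e \<in> E" "e = {u, v}" "card (f u + f v) = 1"
      by (auto simp: mono_indexed_edges_def)
    then have "card (f u) = 1 \<and> card (f v) = 1" using sp_one[of "f u" "f v"] ff by simp
    then have "u \<in> K" "v \<in> K" using cf by (auto split: if_splits)
    moreover have "u \<noteq> v" using e EI by auto
    ultimately show "e \<in> {{u, v} | u v. u \<in> K \<and> v \<in> K \<and> u \<noteq> v}" using e by blast
  qed
  have fK: "finite K" using fV V by auto
  have "card (mono_indexed_edges E f) \<le> r choose 2"
    using card_mono[OF clique_edges_finite[OF fK] sub] clique_edges_card[OF fK] cK by simp
  then show ?thesis using wk by blast
qed


lemma split_sparing:
  assumes csg: "complete_split_graph V E K S r s" and Sn: "S \<noteq> {}"
  shows "sparing_number V E = r choose 2"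
proof -
  have fV: "finite V" and V: "V = K \<union> S" "K \<inter> S = {}" and cK: "card K = r"
    using csg unfolding complete_split_graph_def by blast+
  have fE: "finite E" and EP: "E \<subseteq> Pow V" using edges_sub_pow[OF csg] by auto
  have EI: "{u, v} \<in> E \<longleftrightarrow> u \<noteq> v \<and> u \<in> V \<and> v \<in> V \<and> (u \<in> K \<or> v \<in> K)" for u v
    using edge_iff[OF csg] .
  obtain w where w: "w \<in> S" using Sn by blast
  have wK: "w \<notin> K" using w V by blast
  let ?A = "insert w K"
  have fK: "finite K" using fV V by auto
  have cA: "card ?A - 1 = r" using wK fK cK by simp
  have AV: "?A \<subseteq> V" using w V by auto
  have cl: "\<forall>u\<in>?A. \<forall>v\<in>?A. u \<noteq> v \<longrightarrow> {u, v} \<in> E"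
  proof (intro ballI impI)
    fix u v assume "u \<in> ?A" "v \<in> ?A" "u \<noteq> v"
    then show "{u, v} \<in> E" unfolding EI using AV by auto
  qed
  let ?M = "{card (mono_indexed_edges E f) | f. weak_iasi V E f}"
  have lb: "\<forall>y\<in>?M. r choose 2 \<le> y"
  proof
    fix y assume "y \<in> ?M"
    then obtain f where "y = card (mono_indexed_edges E f)" "weak_iasi V E f" by blast
    then show "r choose 2 \<le> y"
      using lower_bound[of V E f ?A] fE AV fK cl cA by simp
  qed
  obtain f where f: "weak_iasi V E f" "card (mono_indexed_edges E f) \<le> r choose 2"
    using construction[OF csg] by blast
  have fin: "finite ?M"
  proof (rule finite_subset)
    show "?M \<subseteq> {..card E}"
    proof
      fix y assume "y \<in> ?M"
      then obtain g where "y = card (mono_indexed_edges E g)" by blast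
      moreover have "mono_indexed_edges E g \<subseteq> E" by (auto simp: mono_indexed_edges_def)
      ultimately show "y \<in> {..card E}" using fE card_mono by fastforce
    qed
  qed simp
  have mem: "card (mono_indexed_edges E f) \<in> ?M" using f by blast
  then have eq: "card (mono_indexed_edges E f) = r choose 2" using lb f(2) by fastforce
  show ?thesis unfolding sparing_number_def
    by (rule Min_eqI[OF fin]) (use lb mem eq in auto)
qed

theorem theorem2p6:
  fixes V K S :: "'a set" and E :: "'a set set" and r s :: nat and C :: "'a set"
  assumes "complete_split_graph V E K S r s"
    and "maximal_clique V E C"
  shows "sparing_number V E = sparing_number C (induced_edges E C)"
proof -
  note csg = assms(1)
  have fV: "finite V" and V: "V = K \<union> S" "K \<inter> S = {}" and cK: "card K = r"
    and E: "E = {{u, v} | u v. u \<in> K \<and> v \<in> K \<and> u \<noteq> v} \<union> {{u, v} | u v. u \<in> K \<and> v \<in> S}"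
    using csg unfolding complete_split_graph_def by blast+
  have EP: "E \<subseteq> Pow V" using edges_sub_pow[OF csg] by auto
  have EI: "{u, v} \<in> E \<longleftrightarrow> u \<noteq> v \<and> u \<in> V \<and> v \<in> V \<and> (u \<in> K \<or> v \<in> K)" for u v
    using edge_iff[OF csg] .
  have Ccl: "is_clique V E C" and Cmax: "\<And>D. is_clique V E D \<Longrightarrow> C \<subseteq> D \<Longrightarrow> D = C"
    using assms(2) unfolding maximal_clique_def by blast+
  have CV: "C \<subseteq> V" and Cedge: "\<forall>u\<in>C. \<forall>v\<in>C. u \<noteq> v \<longrightarrow> {u, v} \<in> E"
    using Ccl unfolding is_clique_def by blast+
  show ?thesis
  proof (cases "S = {}")
    case True
    have "is_clique V E K" unfolding is_clique_def using V EI by auto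
    moreover have "C \<subseteq> K" using CV V True by auto
    ultimately have "K = C" using Cmax by blast
    then have CVe: "C = V" using V True by auto
    have "induced_edges E C = E" unfolding induced_edges_def CVe using EP by auto
    then show ?thesis using CVe by simp
  next
    case False
    have one: "x = y" if "x \<in> C \<inter> S" "y \<in> C \<inter> S" for x y
    proof (rule ccontr)
      assume "x \<noteq> y"
      then have "{x, y} \<in> E" using that Cedge by auto
      then show False using EI that V by auto
    qed
    obtain v where v: "v \<in> S" "C \<inter> S \<subseteq> {v}"
    proof (cases "C \<inter> S = {}")
      case True then show ?thesis using that False by blast
    next
      case False
      then obtain x where "x \<in> C \<inter> S" by blast
      then show ?thesis using that one by blast
    qed
    have vK: "v \<notin> K" using v V by blast
    have "is_clique V E (insert v K)" unfolding is_clique_def using V EI v by auto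
    moreover have "C \<subseteq> insert v K" using CV V v by auto
    ultimately have Ceq: "insert v K = C" using Cmax by blast
    have fK: "finite K" using fV V by auto
    have IE: "induced_edges E C = {{u, w} | u w. u \<in> K \<and> w \<in> K \<and> u \<noteq> w} \<union> {{u, w} | u w. u \<in> K \<and> w \<in> {v}}"
    proof (rule set_eqI)
      fix e
      show "e \<in> induced_edges E C \<longleftrightarrow> e \<in> {{u, w} | u w. u \<in> K \<and> w \<in> K \<and> u \<noteq> w} \<union> {{u, w} | u w. u \<in> K \<and> w \<in> {v}}"
      proof
        assume "e \<in> induced_edges E C"
        then have eE: "e \<in> E" and eC: "e \<subseteq> C" unfolding induced_edges_def by auto
        then obtain u w where uw: "e = {u, w}" unfolding E by blast
        have "u \<noteq> w" "u \<in> K \<or> w \<in> K" using eE uw EI by auto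
        moreover have "u \<in> insert v K" "w \<in> insert v K" using eC uw Ceq by auto
        ultimately show "e \<in> {{u, w} | u w. u \<in> K \<and> w \<in> K \<and> u \<noteq> w} \<union> {{u, w} | u w. u \<in> K \<and> w \<in> {v}}"
          using uw by (auto simp: insert_commute)
      next
        assume "e \<in> {{u, w} | u w. u \<in> K \<and> w \<in> K \<and> u \<noteq> w} \<union> {{u, w} | u w. u \<in> K \<and> w \<in> {v}}"
        then obtain u w where uw: "e = {u, w}" "u \<in> K" "w \<in> insert v K" "u \<noteq> w"
          using vK by blast
        then have "e \<in> E" using EI V v by auto
        moreover have "e \<subseteq> C" using uw Ceq by auto
        ultimately show "e \<in> induced_edges E C" unfolding induced_edges_def by blast
      qed
    qed
    have "complete_split_graph C (induced_edges E C) K {v} r 1"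
      unfolding complete_split_graph_def using IE Ceq fK vK cK by auto
    then have "sparing_number C (induced_edges E C) = r choose 2"
      using split_sparing by blast
    moreover have "sparing_number V E = r choose 2"
      using split_sparing[OF csg False] .
    ultimately show ?thesis by simp
  qed
qed

end
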